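(* Let $(a_n)_{n\ge0}$ and $(b_n)_{n\ge0}$ be bounded sequences of nonnegative real numbers such that $\sum_n b_n=+\infty$ and $a_n=o(b_n)$, i.e. there is a sequence $c_n\to0$ with $a_n\le c_nb_n$ for all $n$. Then there exists an increasing function $\theta:\mathbb N\to\mathbb N$ such that $\sum_n a_{\theta(n)}<+\infty$ and $\sum_n b_{\theta(n)}=+\infty$. *)

theory Defs
  imports "HOL-Analysis.Analysis"
begin

end

theory Submission
  imports Defs "HOL-Library.Infinite_Set"
begin

lemma block_exists:
  fixes b :: "nat \<Rightarrow> real"
  assumes b_nonneg: "\<And>n. b n \<ge> 0" and bB: "\<And>n. b n \<le> B" and b_div: "\<not> summable b"
  shows "\<exists>m. p < m \<and> 1 \<le> sum b {p..<m} \<and> sum b {p..<m} \<le> 1 + B"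
proof -
  have "\<exists>m. sum b {..<m} > sum b {..<p} + 1"
  proof (rule ccontr)
    assume "\<not> ?thesis"
    hence "\<forall>m. sum b {..<m} \<le> sum b {..<p} + 1" by (simp add: not_less)
    hence h: "\<And>n. sum b {..n} \<le> sum b {..<p} + 1" by (metis lessThan_Suc_atMost)
    have "summable b" using b_nonneg h by (rule bounded_imp_summable)
    thus False using b_div by simp
  qed
  then obtain m where m: "sum b {..<m} > sum b {..<p} + 1" by blast
  have "p \<le> m"
  proof (rule ccontr)
    assume "\<not> p \<le> m"
    hence "sum b {..<m} \<le> sum b {..<p}" using b_nonneg
      by (intro sum_mono2) auto
    thus False using m by simp
  qed
  have split: "sum b {..<m} = sum b {..<p} + sum b {p..<m}"
    using \<open>p \<le> m\<close> by (metis sum.atLeastLessThan_concat lessThan_atLeast0 zero_le)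
  have ex: "\<exists>m. 1 \<le> sum b {p..<m}" using m split by (intro exI[of _ m]) simp
  define m0 where "m0 = (LEAST m. 1 \<le> sum b {p..<m})"
  have m0: "1 \<le> sum b {p..<m0}" unfolding m0_def using LeastI_ex[OF ex] .
  have "p < m0"
  proof (rule ccontr)
    assume "\<not> p < m0" hence "{p..<m0} = {}" by auto
    thus False using m0 by simp
  qed
  then obtain m1 where m1: "m0 = Suc m1" "p \<le> m1" by (metis less_eq_Suc_le Suc_le_D Suc_le_mono)
  have "\<not> 1 \<le> sum b {p..<m1}" unfolding m0_def
    by (rule not_less_Least) (simp add: m0_def[symmetric] m1)
  moreover have "sum b {p..<m0} = sum b {p..<m1} + b m1"
    using m1 by (simp add: sum.atLeastLessThan_Suc)
  ultimately have "sum b {p..<m0} \<le> 1 + B" using bB[of m1] by simp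
  thus ?thesis using m0 \<open>p < m0\<close> by blast
qed

lemma geom_le2: "(\<Sum>k<K. (1/2::real)^k) \<le> 2"
proof -
  have "(\<Sum>k<K. (1/2::real)^k) = 2 - 2*(1/2)^K"
    by (induction K) (auto simp: field_simps)
  thus ?thesis by simp
qed

theorem lemma13:
  fixes a b c :: "nat \<Rightarrow> real"
  assumes a_nonneg: "\<And>n. a n \<ge> 0" and b_nonneg: "\<And>n. b n \<ge> 0"
    and a_bdd: "bounded (range a)" and b_bdd: "bounded (range b)"
    and b_div: "\<not> summable b"
    and c_lim: "c \<longlonglongrightarrow> 0" and a_le: "\<And>n. a n \<le> c n * b n"
  shows "\<exists>\<theta>::nat \<Rightarrow> nat. strict_mono \<theta> \<and> summable (\<lambda>n. a (\<theta> n)) \<and> \<not> summable (\<lambda>n. b (\<theta> n))"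
proof -
  obtain B where bB: "\<And>n. b n \<le> B"
    using b_bdd unfolding bounded_iff by (metis rangeI real_norm_def abs_le_D1)
  have B0: "0 \<le> B" using bB[of 0] b_nonneg[of 0] by simp
  have "\<forall>p. \<exists>m. p < m \<and> 1 \<le> sum b {p..<m} \<and> sum b {p..<m} \<le> 1 + B"
    using block_exists[OF b_nonneg bB b_div] by blast
  then obtain f where f: "\<And>p. p < f p" "\<And>p. 1 \<le> sum b {p..<f p}" "\<And>p. sum b {p..<f p} \<le> 1 + B"
    by metis
  have "\<forall>k. \<exists>N. \<forall>n\<ge>N. \<bar>c n\<bar> \<le> (1/2)^k"
  proof
    fix k :: nat
    have "(0::real) < (1/2)^k" by simp
    from LIMSEQ_D[OF c_lim this] show "\<exists>N. \<forall>n\<ge>N. \<bar>c n\<bar> \<le> (1/2)^k"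
      by (metis less_imp_le real_norm_def diff_zero)
  qed
  then obtain N where N: "\<And>k n. n \<ge> N k \<Longrightarrow> \<bar>c n\<bar> \<le> (1/2)^k" by metis
  define P where "P = rec_nat (N 0) (\<lambda>k p. max (f p) (N (Suc k)))"
  have P0: "P 0 = N 0" and PS: "\<And>k. P (Suc k) = max (f (P k)) (N (Suc k))"
    by (simp_all add: P_def)
  have PN: "N k \<le> P k" for k by (cases k) (simp_all add: P0 PS)
  have Pf: "f (P k) \<le> P (Suc k)" for k by (simp add: PS)
  have Pmono: "strict_mono P"
    by (rule strict_monoI_Suc) (metis Pf f(1) order_less_le_trans)
  define I where "I k = {P k..<f (P k)}" for k
  have Ifin: "finite (I k)" for k by (simp add: I_def)
  have Ile: "x \<in> I k \<Longrightarrow> P k \<le> x \<and> x < P (Suc k)" for x k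
    using Pf[of k] by (auto simp: I_def)
  have Idisj: "I j \<inter> I k = {}" if "j \<noteq> k" for j k
  proof -
    { fix j k :: nat assume "j < k"
      hence "P (Suc j) \<le> P k" using Pmono by (simp add: strict_mono_less_eq)
      hence "I j \<inter> I k = {}" by (auto dest!: Ile) }
    thus ?thesis using that by (metis Int_commute nat_neq_iff)
  qed
  define S where "S = (\<Union>k. I k)"
  have bI: "1 \<le> sum b (I k)" "sum b (I k) \<le> 1 + B" for k using f by (auto simp: I_def)
  have aI: "sum a (I k) \<le> (1/2)^k * (1 + B)" for k
  proof -
    have "sum a (I k) \<le> sum (\<lambda>n. (1/2)^k * b n) (I k)"
    proof (rule sum_mono)
      fix n assume "n \<in> I k"
      hence "N k \<le> n" using PN[of k] Ile by fastforce
      hence "\<bar>c n\<bar> \<le> (1/2)^k" by (rule N)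
      hence "c n * b n \<le> (1/2)^k * b n"
        using b_nonneg[of n] by (metis abs_ge_self mult_right_mono order_trans)
      thus "a n \<le> (1/2)^k * b n" using a_le[of n] by linarith
    qed
    also have "\<dots> = (1/2)^k * sum b (I k)" by (simp add: sum_distrib_left)
    also have "\<dots> \<le> (1/2)^k * (1 + B)" using bI(2)[of k] by (intro mult_left_mono) auto
    finally show ?thesis .
  qed
  have Usum: "sum g (\<Union>k<K. I k) = (\<Sum>k<K. sum g (I k))" for g :: "nat \<Rightarrow> real" and K
    by (rule sum.UNION_disjoint) (auto simp: Ifin Idisj)
  have Sinf: "infinite S"
  proof -
    have "P k \<in> S" for k using f(1)[of "P k"] by (auto simp: S_def I_def)
    moreover have "k \<le> P k" for k using Pmono by (simp add: strict_mono_imp_increasing)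
    ultimately show ?thesis unfolding infinite_nat_iff_unbounded_le by blast
  qed
  have asum: "a summable_on S"
  proof (rule nonneg_bdd_above_summable_on)
    show "0 \<le> a x" for x by (rule a_nonneg)
    show "bdd_above (sum a ` {F. F \<subseteq> S \<and> finite F})"
    proof (rule bdd_aboveI2)
      fix F assume F: "F \<in> {F. F \<subseteq> S \<and> finite F}"
      define K where "K = Suc (Max (insert 0 F))"
      have "F \<subseteq> (\<Union>k<K. I k)"
      proof
        fix x assume x: "x \<in> F"
        then obtain k where k: "x \<in> I k" using F by (auto simp: S_def)
        have "x < K" using F x by (simp add: K_def le_imp_less_Suc)
        also have "K \<le> P K" using Pmono by (simp add: strict_mono_imp_increasing)
        finally have "P k < P K" using Ile[OF k] by linarith
        hence "k < K" using Pmono by (simp add: strict_mono_less)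
        thus "x \<in> (\<Union>k<K. I k)" using k by blast
      qed
      hence "sum a F \<le> sum a (\<Union>k<K. I k)"
        by (intro sum_mono2) (auto simp: Ifin a_nonneg)
      also have "\<dots> = (\<Sum>k<K. sum a (I k))" by (rule Usum)
      also have "\<dots> \<le> (\<Sum>k<K. (1/2)^k * (1 + B))" by (intro sum_mono aI)
      also have "\<dots> = (\<Sum>k<K. (1/2::real)^k) * (1 + B)" by (simp add: sum_distrib_right)
      also have "\<dots> \<le> 2 * (1 + B)" using geom_le2[of K] B0 by (intro mult_right_mono) auto
      finally show "sum a F \<le> 2 * (1 + B)" .
    qed
  qed
  have bsum: "\<not> b summable_on S"
  proof
    assume bs: "b summable_on S"
    obtain K :: nat where K: "real K > infsum b S" using reals_Archimedean2 by blast
    have "sum b (\<Union>k<K. I k) \<le> infsum b S"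
      by (rule finite_sum_le_infsum[OF bs]) (auto simp: Ifin S_def b_nonneg)
    moreover have "sum b (\<Union>k<K. I k) = (\<Sum>k<K. sum b (I k))" by (rule Usum)
    moreover have "(\<Sum>k<K. sum b (I k)) \<ge> (\<Sum>k<K. 1)" by (intro sum_mono bI)
    ultimately show False using K by simp
  qed
  define \<theta> where "\<theta> = enumerate S"
  have sm: "strict_mono \<theta>" and rg: "range \<theta> = S"
    using Sinf by (simp_all add: \<theta>_def strict_mono_enumerate range_enumerate)
  have inj: "inj_on \<theta> UNIV" using sm strict_mono_imp_inj_on by blast
  have "(a \<circ> \<theta>) summable_on UNIV" using asum summable_on_reindex[OF inj, of a] rg by simp
  hence s1: "summable (\<lambda>n. a (\<theta> n))"
    using summable_on_UNIV_nonneg_real_iff[of "a \<circ> \<theta>"] a_nonneg by (simp add: o_def)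
  have "\<not> (b \<circ> \<theta>) summable_on UNIV" using bsum summable_on_reindex[OF inj, of b] rg by simp
  hence s2: "\<not> summable (\<lambda>n. b (\<theta> n))"
    using summable_on_UNIV_nonneg_real_iff[of "b \<circ> \<theta>"] b_nonneg by (simp add: o_def)
  show ?thesis using sm s1 s2 by blast
qed

end
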